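(* Let $f\in C(\Omega)$ with $f\ge 0$ in $\Omega$. If $u$ is a viscosity subsolution (resp. supersolution) of the Monge–Ampère equation $M(D^2u(x),f(x))=0$ in $\Omega$ on the set of convex functions, then $u$ is a viscosity subsolution (resp. supersolution) of the Bellman equation $H(D^2u(x),f(x))=0$ in $\Omega$.
   Context: Let $d\ge 2$ and let $\Omega\subset\mathbb R^d$ be a bounded open strictly convex domain. $\mathbb S$ denotes the set of real symmetric $d\times d$ matrices, $\mathbb S_+=\{A\in\mathbb S: A\ge 0\}$ (positive semidefinite matrices), $\mathbb S_1=\{B\in\mathbb S_+:\operatorname{tr}B=1\}$, and $A:B=\operatorname{tr}(A^TB)$ is the Frobenius inner product. For $A\in\mathbb S$ and $f\in[0,\infty)$ define the Bellman operator $H(A,f)=\sup_{B\in\mathbb S_1}\bigl(-B:A+f\sqrt[d]{\det B}\bigr)$ and the Monge–Ampère operator $M(A,f)=(f/d)^d-\det A$. $\mathrm{USC}(G)$, $\mathrm{LSC}(G)$ denote upper/lower semicontinuous functions on $G$. Viscosity notions: for $F:\mathbb S\times\Omega\to\mathbb R$ (here $F(A,x)=H(A,f(x))$ or $F(A,x)=M(A,f(x))$), a function $u\in\mathrm{USC}(\Omega)$ (resp. $u\in\mathrm{LSC}(\Omega)$) is a viscosity subsolution (resp. supersolution) of $F(D^2u(x),x)=0$ in $\Omega$ if for every $\varphi\in C^2(\Omega)$ such that $u-\varphi$ has a local maximum (resp. minimum) at $x\in\Omega$ one has $F(D^2\varphi(x),x)\le 0$ (resp. $\ge 0$); a viscosity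 solution is both a sub- and a supersolution. The function $u$ is a viscosity subsolution (resp. supersolution) on the set of convex functions if $u$ is convex and the same inequality holds for every convex $\varphi\in C^2(\Omega)$ such that $u-\varphi$ has a local maximum (resp. minimum) at $x\in\Omega$; a viscosity solution on the set of convex functions is both. *)

theory Defs
  imports "HOL-Analysis.Analysis"
begin

text \<open>Matrices are elements of real^'n^'n, d = CARD('n).\<close>

definition sym_mat :: "real^'n^'n \<Rightarrow> bool" where
  "sym_mat A \<longleftrightarrow> transpose A = A"

definition psd_mat :: "real^'n^'n \<Rightarrow> bool" where
  "psd_mat A \<longleftrightarrow> sym_mat A \<and> (\<forall>x. 0 \<le> x \<bullet> (A *v x))"

definition trace_mat :: "real^'n^'n \<Rightarrow> real" where
  "trace_mat A = (\<Sum>i\<in>UNIV. A $ i $ i)"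

definition frob :: "real^'n^'n \<Rightarrow> real^'n^'n \<Rightarrow> real" where
  "frob A B = trace_mat (transpose A ** B)"

definition S1 :: "(real^'n^'n) set" where
  "S1 = {B. psd_mat B \<and> trace_mat B = 1}"

definition bellman :: "real^'n^'n \<Rightarrow> real \<Rightarrow> real" where
  "bellman A f = (SUP B\<in>(S1 :: (real^'n^'n) set). - frob B A + f * root CARD('n) (det B))"

definition monge_ampere :: "real^'n^'n \<Rightarrow> real \<Rightarrow> real" where
  "monge_ampere A f = (f / real CARD('n)) ^ CARD('n) - det A"

definition strictly_convex_set :: "(real^'n) set \<Rightarrow> bool" where
  "strictly_convex_set \<Omega> \<longleftrightarrow>
     (\<forall>x\<in>closure \<Omega>. \<forall>y\<in>closure \<Omega>. \<forall>t::real. x \<noteq> y \<and> 0 < t \<and> t < 1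
        \<longrightarrow> (1 - t) *\<^sub>R x + t *\<^sub>R y \<in> \<Omega>)"

definition usc_on :: "(real^'n) set \<Rightarrow> (real^'n \<Rightarrow> real) \<Rightarrow> bool" where
  "usc_on G u \<longleftrightarrow> (\<forall>x\<in>G. \<forall>a. u x < a \<longrightarrow> (\<forall>\<^sub>F y in at x within G. u y < a))"

definition lsc_on :: "(real^'n) set \<Rightarrow> (real^'n \<Rightarrow> real) \<Rightarrow> bool" where
  "lsc_on G u \<longleftrightarrow> (\<forall>x\<in>G. \<forall>a. a < u x \<longrightarrow> (\<forall>\<^sub>F y in at x within G. a < u y))"

definition C2_hess :: "(real^'n) set \<Rightarrow> (real^'n \<Rightarrow> real) \<Rightarrow> (real^'n \<Rightarrow> real^'n^'n) \<Rightarrow> bool" where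
  "C2_hess G \<phi> Hs \<longleftrightarrow> (\<exists>g :: real^'n \<Rightarrow> real^'n.
      (\<forall>x\<in>G. (\<phi> has_derivative (\<lambda>h. g x \<bullet> h)) (at x)) \<and>
      (\<forall>x\<in>G. (g has_derivative (\<lambda>h. Hs x *v h)) (at x)) \<and>
      continuous_on G g \<and> continuous_on G Hs)"

definition loc_max_at :: "(real^'n) set \<Rightarrow> (real^'n \<Rightarrow> real) \<Rightarrow> real^'n \<Rightarrow> bool" where
  "loc_max_at G w x \<longleftrightarrow> (\<exists>e>0. \<forall>y\<in>G. dist y x < e \<longrightarrow> w y \<le> w x)"

definition loc_min_at :: "(real^'n) set \<Rightarrow> (real^'n \<Rightarrow> real) \<Rightarrow> real^'n \<Rightarrow> bool" where
  "loc_min_at G w x \<longleftrightarrow> (\<exists>e>0. \<forall>y\<in>G. dist y x < e \<longrightarrow> w x \<le> w y)"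

definition visc_sub :: "(real^'n^'n \<Rightarrow> real^'n \<Rightarrow> real) \<Rightarrow> (real^'n) set \<Rightarrow> (real^'n \<Rightarrow> real) \<Rightarrow> bool" where
  "visc_sub F G u \<longleftrightarrow> usc_on G u \<and>
     (\<forall>\<phi> Hs x. C2_hess G \<phi> Hs \<and> x \<in> G \<and> loc_max_at G (\<lambda>y. u y - \<phi> y) x \<longrightarrow> F (Hs x) x \<le> 0)"

definition visc_super :: "(real^'n^'n \<Rightarrow> real^'n \<Rightarrow> real) \<Rightarrow> (real^'n) set \<Rightarrow> (real^'n \<Rightarrow> real) \<Rightarrow> bool" where
  "visc_super F G u \<longleftrightarrow> lsc_on G u \<and>
     (\<forall>\<phi> Hs x. C2_hess G \<phi> Hs \<and> x \<in> G \<and> loc_min_at G (\<lambda>y. u y - \<phi> y) x \<longrightarrow> 0 \<le> F (Hs x) x)"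

text \<open>Same notions on the set of convex functions: u convex, only convex test functions.\<close>
definition visc_sub_convex :: "(real^'n^'n \<Rightarrow> real^'n \<Rightarrow> real) \<Rightarrow> (real^'n) set \<Rightarrow> (real^'n \<Rightarrow> real) \<Rightarrow> bool" where
  "visc_sub_convex F G u \<longleftrightarrow> usc_on G u \<and> convex_on G u \<and>
     (\<forall>\<phi> Hs x. C2_hess G \<phi> Hs \<and> convex_on G \<phi> \<and> x \<in> G \<and> loc_max_at G (\<lambda>y. u y - \<phi> y) x
        \<longrightarrow> F (Hs x) x \<le> 0)"

definition visc_super_convex :: "(real^'n^'n \<Rightarrow> real^'n \<Rightarrow> real) \<Rightarrow> (real^'n) set \<Rightarrow> (real^'n \<Rightarrow> real) \<Rightarrow> bool" where
  "visc_super_convex F G u \<longleftrightarrow> lsc_on G u \<and> convex_on G u \<and>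
     (\<forall>\<phi> Hs x. C2_hess G \<phi> Hs \<and> convex_on G \<phi> \<and> x \<in> G \<and> loc_min_at G (\<lambda>y. u y - \<phi> y) x
        \<longrightarrow> 0 \<le> F (Hs x) x)"

end

theory Submission
  imports Defs
begin



lemma quad_zero:
  fixes a b :: real
  assumes "\<forall>t. a*t + b*t^2 \<le> 0" shows "a = 0"
proof -
  define c where "c = \<bar>b\<bar> + 1"
  have c: "c > 0" "c + b > 0" unfolding c_def by auto
  have "a*(a/c) + b*(a/c)^2 \<le> 0" using assms by blast
  also have "a*(a/c) + b*(a/c)^2 = a^2 * (c + b) / c^2"
    using c by (simp add: field_simps power2_eq_square)
  finally have "a^2 * (c+b) \<le> 0" using c by (simp add: divide_le_0_iff)
  then have "a^2 \<le> 0" using c by (simp add: mult_le_0_iff)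
  then show ?thesis by simp
qed

lemma sym_inner:
  fixes A :: "real^'n^'n"
  assumes "transpose A = A"
  shows "x \<bullet> (A *v y) = (A *v x) \<bullet> y"
  by (metis assms dot_lmul_matrix transpose_matrix_vector)

lemma cont_quad: "continuous_on S (\<lambda>x. x \<bullet> ((A::real^'n^'n) *v x))"
  by (intro continuous_intros continuous_on_id linear_continuous_on matrix_vector_mul_linear)




lemma spectral_subspace:
  fixes A :: "real^'n^'n"
  assumes symA: "transpose A = A"
  shows "subspace V \<Longrightarrow> dim V = k \<Longrightarrow> (\<forall>x\<in>V. A *v x \<in> V) \<Longrightarrow>
     \<exists>B. B \<subseteq> V \<and> finite B \<and> card B = k \<and> (\<forall>b\<in>B. norm b = 1 \<and> (\<exists>l. A *v b = l *\<^sub>R b))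
        \<and> (\<forall>b\<in>B. \<forall>c\<in>B. b \<noteq> c \<longrightarrow> b \<bullet> c = 0)"
proof (induction k arbitrary: V)
  case 0 show ?case by (rule exI[of _ "{}"]) simp
next
  case (Suc k)
  note sV = Suc.prems(1) and inv = Suc.prems(3)
  have "dim V \<noteq> 0" using Suc.prems(2) by simp
  then have "\<not> V \<subseteq> {0}" by (simp only: dim_eq_0 not_False_eq_True)
  then obtain z where z: "z \<in> V" "z \<noteq> 0" by blast
  define K where "K = V \<inter> sphere 0 1"
  have Kc: "compact K" unfolding K_def
    by (intro closed_Int_compact closed_subspace sV compact_sphere)
  have "z /\<^sub>R norm z \<in> V" using z(1) sV by (rule subspace_scale[rotated])
  moreover have "norm (z /\<^sub>R norm z) = 1" using z(2) by simp
  ultimately have "z /\<^sub>R norm z \<in> K" unfolding K_def by simp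
  then have "K \<noteq> {}" by blast
  then obtain v where vK: "v \<in> K" and vmax: "\<forall>y\<in>K. y \<bullet> (A *v y) \<le> v \<bullet> (A *v v)"
    using continuous_attains_sup[OF Kc _ cont_quad] by blast
  define l where "l = v \<bullet> (A *v v)"
  have vV: "v \<in> V" and nv: "norm v = 1" using vK unfolding K_def by auto
  have vv: "v \<bullet> v = 1" using nv by (simp add: norm_eq_1)
  have bound: "y \<bullet> (A *v y) \<le> l * (y \<bullet> y)" if "y \<in> V" for y
  proof (cases "y = 0")
    case True then show ?thesis by simp
  next
    case False
    have "y /\<^sub>R norm y \<in> K" unfolding K_def using that False sV by (simp add: subspace_scale)
    then have "(y /\<^sub>R norm y) \<bullet> (A *v (y /\<^sub>R norm y)) \<le> l" using vmax l_def by blast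
    then have "(y \<bullet> (A *v y)) / (norm y)^2 \<le> l"
      by (simp add: matrix_vector_mult_scaleR power2_eq_square divide_inverse mult_ac)
    then show ?thesis using False by (simp add: divide_le_eq power2_norm_eq_inner mult.commute)
  qed
  have orth: "w \<bullet> (A *v v) = 0" if "w \<in> V" "w \<bullet> v = 0" for w
  proof -
    have "\<forall>t. (2 * (w \<bullet> (A *v v))) * t + (w \<bullet> (A *v w) - l * (w \<bullet> w)) * t^2 \<le> 0"
    proof
      fix t :: real
      have "v + t *\<^sub>R w \<in> V" using that vV sV by (simp add: subspace_add subspace_scale)
      then have "(v + t *\<^sub>R w) \<bullet> (A *v (v + t *\<^sub>R w)) \<le> l * ((v + t *\<^sub>R w) \<bullet> (v + t *\<^sub>R w))"
        by (rule bound)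
      moreover have "v \<bullet> (A *v w) = w \<bullet> (A *v v)"
        using sym_inner[OF symA, of v w] by (simp add: inner_commute)
      moreover have "w \<bullet> v = 0" "v \<bullet> w = 0" using that by (auto simp: inner_commute)
      ultimately show "(2 * (w \<bullet> (A *v v))) * t + (w \<bullet> (A *v w) - l * (w \<bullet> w)) * t^2 \<le> 0"
        using vv by (simp add: algebra_simps inner_add_left inner_add_right power2_eq_square l_def)
    qed
    then show ?thesis using quad_zero by fastforce
  qed
  have eig: "A *v v = l *\<^sub>R v"
  proof -
    define r where "r = A *v v - l *\<^sub>R v"
    have rV: "r \<in> V" unfolding r_def using inv vV sV by (simp add: subspace_diff subspace_scale)
    have "r \<bullet> v = 0" unfolding r_def using vv by (simp add: inner_diff_left inner_diff_right l_def inner_commute)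
    then have "r \<bullet> (A *v v) = 0" using orth rV by blast
    then have "r \<bullet> r = 0" using \<open>r \<bullet> v = 0\<close> unfolding r_def
      by (simp add: inner_diff_right) 
    then show ?thesis unfolding r_def by simp
  qed
  define V' where "V' = {w \<in> V. w \<bullet> v = 0}"
  have sV': "subspace V'" unfolding V'_def subspace_def using sV
    by (auto simp: subspace_def inner_add_left)
  have inv': "\<forall>x\<in>V'. A *v x \<in> V'"
  proof
    fix x assume "x \<in> V'"
    then have "x \<in> V" "x \<bullet> v = 0" unfolding V'_def by auto
    moreover have "(A *v x) \<bullet> v = x \<bullet> (A *v v)" using sym_inner[OF symA, of x v] by simp
    ultimately show "A *v x \<in> V'" unfolding V'_def using inv eig by auto
  qed
  have vnot: "v \<notin> V'" unfolding V'_def using vv by auto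
  have spanV: "span (insert v V') = V"
  proof
    have "insert v V' \<subseteq> V" using vV unfolding V'_def by auto
    then show "span (insert v V') \<subseteq> V" using sV by (rule span_minimal)
    show "V \<subseteq> span (insert v V')"
    proof
      fix w assume wV: "w \<in> V"
      define w' where "w' = w - (w \<bullet> v) *\<^sub>R v"
      have "w' \<in> V'" unfolding V'_def w'_def using wV vV sV vv
        by (simp add: subspace_diff subspace_scale inner_diff_left)
      then have "w' \<in> span (insert v V')" by (simp add: span_base)
      moreover have "(w \<bullet> v) *\<^sub>R v \<in> span (insert v V')" by (simp add: span_base span_scale)
      ultimately have "w' + (w \<bullet> v) *\<^sub>R v \<in> span (insert v V')" by (rule span_add)
      then show "w \<in> span (insert v V')" unfolding w'_def by simp
    qed
  qed
  have "v \<notin> span V'" using vnot sV' by (metis span_eq_iff)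
  then have "dim (insert v V') = dim V' + 1" using dim_insert[of v V'] by simp
  moreover have "dim V = dim (insert v V')"
    using spanV dim_span[of "insert v V'"] by simp
  ultimately have "dim V = dim V' + 1" by simp
  then have "dim V' = k" using Suc.prems(2) by simp
  then obtain B' where B': "B' \<subseteq> V'" "finite B'" "card B' = k"
      "\<forall>b\<in>B'. norm b = 1 \<and> (\<exists>l. A *v b = l *\<^sub>R b)"
      "\<forall>b\<in>B'. \<forall>c\<in>B'. b \<noteq> c \<longrightarrow> b \<bullet> c = 0"
    using Suc.IH[OF sV' _ inv'] by blast
  have vB': "v \<notin> B'" using B'(1) vnot by auto
  show ?case
  proof (intro exI[of _ "insert v B'"] conjI)
    show "insert v B' \<subseteq> V" using B'(1) vV V'_def by auto
    show "finite (insert v B')" using B' by simp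
    show "card (insert v B') = Suc k" using B' vB' by simp
    show "\<forall>b\<in>insert v B'. norm b = 1 \<and> (\<exists>l. A *v b = l *\<^sub>R b)" using B'(4) nv eig by auto
    show "\<forall>b\<in>insert v B'. \<forall>c\<in>insert v B'. b \<noteq> c \<longrightarrow> b \<bullet> c = 0"
      using B'(1,5) unfolding V'_def by (auto simp: inner_commute)
  qed
qed




lemma quad_entry:
  fixes P A Q :: "real^'n^'n"
  shows "(transpose P ** A ** Q) $ i $ j = (\<chi> k. P$k$i) \<bullet> (A *v (\<chi> k. Q$k$j))"
proof -
  have "(transpose P ** A ** Q) $ i $ j = (\<Sum>k\<in>UNIV. (\<Sum>m\<in>UNIV. P$m$i * A$m$k) * Q$k$j)"
    by (simp add: matrix_matrix_mult_def transpose_def)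
  also have "\<dots> = (\<Sum>k\<in>UNIV. \<Sum>m\<in>UNIV. P$m$i * A$m$k * Q$k$j)"
    by (simp add: sum_distrib_right)
  also have "\<dots> = (\<Sum>m\<in>UNIV. \<Sum>k\<in>UNIV. P$m$i * A$m$k * Q$k$j)"
    by (rule sum.swap)
  also have "\<dots> = (\<chi> k. P$k$i) \<bullet> (A *v (\<chi> k. Q$k$j))"
    by (simp add: matrix_vector_mult_def inner_vec_def sum_distrib_left mult.assoc)
  finally show ?thesis .
qed

lemma spectral:
  fixes A :: "real^'n^'n"
  assumes symA: "transpose A = A"
  shows "\<exists>Q. orthogonal_matrix Q \<and> (\<forall>i j. i \<noteq> j \<longrightarrow> (transpose Q ** A ** Q) $ i $ j = 0)"
proof -
  have "dim (UNIV :: (real^'n) set) = CARD('n)" by (simp only: dim_UNIV DIM_cart DIM_real mult_1_right)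
  then have "\<exists>B\<subseteq>UNIV. finite B \<and> card B = CARD('n) \<and> (\<forall>b\<in>B. norm b = 1 \<and> (\<exists>l. A *v b = l *\<^sub>R b))
        \<and> (\<forall>b\<in>B. \<forall>c\<in>B. b \<noteq> c \<longrightarrow> b \<bullet> c = 0)"
    by (rule spectral_subspace[OF symA subspace_UNIV]) simp
  then obtain B where B: "finite B" "card B = CARD('n)"
      "\<forall>b\<in>B. norm b = 1 \<and> (\<exists>l. A *v b = l *\<^sub>R b)"
      "\<forall>b\<in>B. \<forall>c\<in>B. b \<noteq> c \<longrightarrow> b \<bullet> c = 0"
    by blast
  have "\<exists>h. bij_betw h (UNIV::'n set) B"
    by (rule finite_same_card_bij) (simp_all add: B(1,2))
  then obtain b where bij: "bij_betw b (UNIV::'n set) B" by blast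
  have bB: "b i \<in> B" for i using bij bij_betwE by blast
  have binj: "b i \<noteq> b j" if "i \<noteq> j" for i j using bij that unfolding bij_betw_def inj_on_def by blast
  define Q where "Q = (\<chi> i j. b j $ i)"
  have col: "(\<chi> k. Q$k$j) = b j" for j unfolding Q_def by (simp add: vec_eq_iff)
  have "transpose Q ** Q = mat 1"
  proof -
    have "(transpose Q ** Q) $ i $ j = (if i = j then 1 else 0)" for i j
    proof -
      have "(transpose Q ** Q) $ i $ j = (transpose Q ** mat 1 ** Q) $ i $ j"
        by (simp add: matrix_mul_rid)
      also have "\<dots> = b i \<bullet> b j" unfolding quad_entry col by simp
      also have "\<dots> = (if i = j then 1 else 0)"
        using B(3,4) bB binj by (auto simp: norm_eq_1)
      finally show ?thesis .
    qed
    then show ?thesis by (simp add: vec_eq_iff mat_def)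
  qed
  then have "orthogonal_matrix Q" by (simp add: orthogonal_matrix)
  moreover have "(transpose Q ** A ** Q) $ i $ j = 0" if "i \<noteq> j" for i j
  proof -
    obtain l where "A *v b j = l *\<^sub>R b j" using B(3) bB by blast
    then have "(transpose Q ** A ** Q) $ i $ j = l * (b i \<bullet> b j)" unfolding quad_entry col by simp
    then show ?thesis using B(4) bB binj that by auto
  qed
  ultimately show ?thesis by blast
qed




lemma inner_transpose:
  fixes M :: "real^'n^'n"
  shows "x \<bullet> (transpose M *v y) = (M *v x) \<bullet> y"
  by (metis dot_lmul_matrix inner_commute transpose_matrix_vector)

lemma orth_both:
  assumes "orthogonal_matrix (Q::real^'n^'n)"
  shows "transpose Q ** Q = mat 1" "Q ** transpose Q = mat 1"
  using assms unfolding orthogonal_matrix_def by auto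

lemma trace_conj:
  fixes A Q :: "real^'n^'n"
  assumes "orthogonal_matrix Q"
  shows "trace (transpose Q ** A ** Q) = trace A"
proof -
  have "trace (transpose Q ** A ** Q) = trace (Q ** (transpose Q ** A))"
    by (rule trace_mul_sym)
  also have "\<dots> = trace A" using orth_both[OF assms]
    by (simp add: matrix_mul_assoc matrix_mul_lid)
  finally show ?thesis .
qed

lemma det_conj:
  fixes A Q :: "real^'n^'n"
  assumes "orthogonal_matrix Q"
  shows "det (transpose Q ** A ** Q) = det A"
proof -
  have "det (transpose Q ** A ** Q) = det (transpose Q) * det A * det Q" by (simp add: det_mul)
  also have "\<dots> = det (transpose Q ** Q) * det A" by (simp add: det_mul mult_ac)
  also have "\<dots> = det A" using orth_both[OF assms] by simp
  finally show ?thesis .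
qed

lemma psd_diag_nonneg:
  fixes A Q :: "real^'n^'n"
  assumes "\<forall>x. 0 \<le> x \<bullet> (A *v x)"
  shows "0 \<le> (transpose Q ** A ** Q) $ k $ k"
  unfolding quad_entry using assms by blast

lemma root_powr:
  assumes "0 < n" "0 \<le> x"
  shows "root n x = x powr (1 / real n)"
proof (cases "x = 0")
  case True then show ?thesis by simp
next
  case False then show ?thesis using assms by (simp add: root_powr_inverse)
qed

lemma psd_amgm:
  fixes P :: "real^'n^'n"
  assumes "psd_mat P"
  shows "real CARD('n) * root CARD('n) (det P) \<le> trace P"
proof -
  have symP: "transpose P = P" and qP: "\<forall>x. 0 \<le> x \<bullet> (P *v x)"
    using assms unfolding psd_mat_def sym_mat_def by auto
  obtain Q where Q: "orthogonal_matrix Q" and diag: "\<forall>i j. i \<noteq> j \<longrightarrow> (transpose Q ** P ** Q) $ i $ j = 0"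
    using spectral[OF symP] by blast
  define D where "D = transpose Q ** P ** Q"
  define \<mu> where "\<mu> k = D $ k $ k" for k
  have \<mu>0: "0 \<le> \<mu> k" for k unfolding \<mu>_def D_def by (rule psd_diag_nonneg[OF qP])
  have tr: "trace P = (\<Sum>k\<in>UNIV. \<mu> k)"
    using trace_conj[OF Q, of P] unfolding D_def[symmetric] \<mu>_def trace_def by simp
  have dt: "det P = (\<Prod>k\<in>UNIV. \<mu> k)"
    using det_conj[OF Q, of P] det_diagonal[of D] diag unfolding D_def[symmetric] \<mu>_def by simp
  have "(\<Prod>k\<in>UNIV. \<mu> k) powr (1 / real (card (UNIV::'n set))) \<le> (\<Sum>k\<in>UNIV. \<mu> k / real (card (UNIV::'n set)))"
    by (rule arith_geom_mean) (simp_all add: \<mu>0)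
  then have "root CARD('n) (det P) \<le> trace P / real CARD('n)"
    unfolding dt tr using root_powr[of "CARD('n)" "\<Prod>k\<in>UNIV. \<mu> k"] \<mu>0
    by (simp add: prod_nonneg sum_divide_distrib)
  then show ?thesis by (simp add: field_simps)
qed




lemma trace_amgm:
  fixes B S :: "real^'n^'n"
  assumes B: "psd_mat B" and S: "psd_mat S"
  shows "real CARD('n) * root CARD('n) (det B * det S) \<le> trace (B ** S)"
proof -
  have symS: "transpose S = S" and qS: "\<forall>x. 0 \<le> x \<bullet> (S *v x)"
    using S unfolding psd_mat_def sym_mat_def by auto
  have symB: "transpose B = B" and qB: "\<forall>x. 0 \<le> x \<bullet> (B *v x)"
    using B unfolding psd_mat_def sym_mat_def by auto
  obtain Q where Q: "orthogonal_matrix Q" and diag: "\<forall>i j. i \<noteq> j \<longrightarrow> (transpose Q ** S ** Q) $ i $ j = 0"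
    using spectral[OF symS] by blast
  define D where "D = transpose Q ** S ** Q"
  have D0: "0 \<le> D $ k $ k" for k unfolding D_def by (rule psd_diag_nonneg[OF qS])
  define R :: "real^'n^'n" where "R = (\<chi> i j. if i = j then sqrt (D$i$i) else 0)"
  have symR: "transpose R = R" unfolding R_def transpose_def by (simp add: vec_eq_iff)
  have RR: "R ** R = D"
  proof -
    have "(R ** R) $ i $ j = D $ i $ j" for i j
    proof -
      have "(R ** R) $ i $ j = (\<Sum>k\<in>UNIV. R$i$k * R$k$j)" by (simp add: matrix_matrix_mult_def)
      also have "\<dots> = (\<Sum>k\<in>{i}. R$i$k * R$k$j)"
        by (rule sum.mono_neutral_right) (auto simp: R_def)
      also have "\<dots> = (if i = j then D$i$i else 0)" using D0[of i] by (auto simp: R_def)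
      also have "\<dots> = D $ i $ j" using diag unfolding D_def by auto
      finally show ?thesis .
    qed
    then show ?thesis by (simp add: vec_eq_iff)
  qed
  have QDQ: "Q ** D ** transpose Q = S"
  proof -
    have "Q ** D ** transpose Q = (Q ** transpose Q) ** S ** (Q ** transpose Q)"
      unfolding D_def by (simp add: matrix_mul_assoc)
    then show ?thesis using orth_both[OF Q] by (simp add: matrix_mul_lid matrix_mul_rid)
  qed
  define C where "C = transpose Q ** B ** Q"
  define P where "P = R ** C ** R"
  have symC: "transpose C = C" unfolding C_def using symB by (simp add: matrix_transpose_mul matrix_mul_assoc)
  have psdP: "psd_mat P"
    unfolding psd_mat_def sym_mat_def
  proof
    show "transpose P = P" unfolding P_def using symR symC by (simp add: matrix_transpose_mul matrix_mul_assoc)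
    show "\<forall>x. 0 \<le> x \<bullet> (P *v x)"
    proof
      fix x :: "real^'n"
      have "x \<bullet> (P *v x) = (R *v x) \<bullet> (C *v (R *v x))"
        unfolding P_def using sym_inner[OF symR] by (simp add: matrix_vector_mul_assoc[symmetric])
      also have "\<dots> = (Q *v (R *v x)) \<bullet> (B *v (Q *v (R *v x)))"
        unfolding C_def matrix_vector_mul_assoc[symmetric] by (rule inner_transpose)
      finally show "0 \<le> x \<bullet> (P *v x)" using qB by simp
    qed
  qed
  have trP: "trace P = trace (B ** S)"
  proof -
    have "trace P = trace (R ** (C ** R))" unfolding P_def by (simp add: matrix_mul_assoc)
    also have "\<dots> = trace (C ** R ** R)" by (rule trace_mul_sym)
    also have "C ** R ** R = C ** D" by (simp only: matrix_mul_assoc[symmetric] RR)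
    also have "C ** D = transpose Q ** (B ** Q ** D)" unfolding C_def by (simp add: matrix_mul_assoc)
    also have "trace (transpose Q ** (B ** Q ** D)) = trace (B ** Q ** D ** transpose Q)" by (rule trace_mul_sym)
    also have "B ** Q ** D ** transpose Q = B ** (Q ** D ** transpose Q)" by (simp only: matrix_mul_assoc)
    also have "\<dots> = B ** S" using QDQ by simp
    finally show ?thesis .
  qed
  have dP: "det P = det B * det S"
  proof -
    have "det P = det (R ** R) * det C" unfolding P_def by (simp add: det_mul)
    also have "\<dots> = det S * det B" unfolding RR C_def D_def using det_conj[OF Q] by simp
    finally show ?thesis by simp
  qed
  show ?thesis using psd_amgm[OF psdP] trP dP by simp
qed




lemma norm_mv_le:
  fixes M :: "real^'n^'m"
  shows "norm (M *v h) \<le> real CARD('m) * norm M * norm h"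
proof -
  have "norm (M *v h) \<le> (\<Sum>i\<in>UNIV. \<bar>(M *v h)$i\<bar>)" by (rule norm_le_l1_cart)
  also have "\<dots> \<le> (\<Sum>i\<in>(UNIV::'m set). norm M * norm h)"
  proof -
    have pt: "\<bar>(M *v h)$i\<bar> \<le> norm M * norm h" for i
    proof -
    have "\<bar>(M *v h)$i\<bar> = \<bar>M$i \<bullet> h\<bar>" by (simp add: matrix_vector_mul_component)
    also have "\<dots> \<le> norm (M$i) * norm h" by (rule Cauchy_Schwarz_ineq2)
    also have "\<dots> \<le> norm M * norm h" by (simp add: Finite_Cartesian_Product.norm_nth_le mult_right_mono)
    finally show "\<bar>(M *v h)$i\<bar> \<le> norm M * norm h" .
    qed
    show ?thesis by (rule sum_mono) (rule pt)
  qed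
  finally show ?thesis by simp
qed

lemma quad_le:
  fixes M :: "real^'n^'n"
  shows "\<bar>h \<bullet> (M *v h)\<bar> \<le> real CARD('n) * norm M * (norm h)^2"
proof -
  have "\<bar>h \<bullet> (M *v h)\<bar> \<le> norm h * norm (M *v h)" by (rule Cauchy_Schwarz_ineq2)
  also have "\<dots> \<le> norm h * (real CARD('n) * norm M * norm h)" by (simp add: mult_left_mono norm_mv_le)
  finally show ?thesis by (simp add: power2_eq_square mult_ac)
qed

lemma taylor2:
  fixes \<phi> :: "real^'n \<Rightarrow> real" and g :: "real^'n \<Rightarrow> real^'n" and Hs :: "real^'n \<Rightarrow> real^'n^'n"
  assumes G: "open G" "x \<in> G"
    and dphi: "\<forall>y\<in>G. (\<phi> has_derivative (\<lambda>h. g y \<bullet> h)) (at y)"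
    and dg: "\<forall>y\<in>G. (g has_derivative (\<lambda>h. Hs y *v h)) (at y)"
    and cH: "continuous_on G Hs" and e: "e > 0"
  shows "\<exists>d>0. \<forall>h. norm h < d \<longrightarrow> x + h \<in> G \<and>
     \<bar>\<phi> (x + h) - \<phi> x - g x \<bullet> h - (h \<bullet> (Hs x *v h)) / 2\<bar> \<le> e * (norm h)^2"
proof -
  define K where "K = real CARD('n)"
  have K: "K > 0" unfolding K_def by simp
  have "isCont Hs x" using cH G continuous_on_eq_continuous_at by blast
  then obtain d1 where d1: "d1 > 0" "\<forall>y. dist y x < d1 \<longrightarrow> dist (Hs y) (Hs x) < e / K"
    using K e unfolding continuous_at_eps_delta by (metis divide_pos_pos)
  obtain d0 where d0: "d0 > 0" "ball x d0 \<subseteq> G" using G open_contains_ball by blast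
  define d where "d = min d0 d1"
  have "d > 0" using d0 d1 by (simp add: d_def)
  moreover have "x + h \<in> G \<and>
     \<bar>\<phi> (x + h) - \<phi> x - g x \<bullet> h - (h \<bullet> (Hs x *v h)) / 2\<bar> \<le> e * (norm h)^2"
    if h: "norm h < d" for h
  proof -
    have inG: "x + t *\<^sub>R h \<in> G" if "0 \<le> t" "t \<le> 1" for t
    proof -
      have "norm (t *\<^sub>R h) \<le> norm h" using that by (simp add: mult_left_le_one_le)
      then have "x + t *\<^sub>R h \<in> ball x d0" using h by (simp add: dist_norm d_def)
      then show ?thesis using d0 by blast
    qed
    have close: "dist (Hs (x + t *\<^sub>R h)) (Hs x) < e / K" if "0 \<le> t" "t \<le> 1" for t
    proof -
      have "norm (t *\<^sub>R h) \<le> norm h" using that by (simp add: mult_left_le_one_le)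
      then have "dist (x + t *\<^sub>R h) x < d1" using h by (simp add: dist_norm d_def)
      then show ?thesis using d1 by blast
    qed
    have "x + h \<in> G" using inG[of 1] by simp
    moreover have "\<bar>\<phi> (x + h) - \<phi> x - g x \<bullet> h - (h \<bullet> (Hs x *v h)) / 2\<bar> \<le> e * (norm h)^2"
    proof (cases "h = 0")
      case True then show ?thesis by simp
    next
      case False
      define diff :: "nat \<Rightarrow> real \<Rightarrow> real" where
        "diff m t = (if m = 0 then \<phi> (x + t *\<^sub>R h) else if m = 1 then g (x + t *\<^sub>R h) \<bullet> h
                     else h \<bullet> (Hs (x + t *\<^sub>R h) *v h))" for m t
      have df0: "diff 0 = (\<lambda>t. \<phi> (x + t *\<^sub>R h))" by (simp add: fun_eq_iff diff_def)
      have df1: "diff 1 = (\<lambda>t. g (x + t *\<^sub>R h) \<bullet> h)" by (simp add: fun_eq_iff diff_def)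
      have df1s: "diff (Suc 0) = (\<lambda>t. g (x + t *\<^sub>R h) \<bullet> h)" by (simp add: fun_eq_iff diff_def)
      have df2: "diff 2 t = h \<bullet> (Hs (x + t *\<^sub>R h) *v h)" for t by (simp add: diff_def)
      have lin: "((\<lambda>t. x + t *\<^sub>R h) has_derivative (\<lambda>s. s *\<^sub>R h)) (at t)" for t
        by (auto intro!: derivative_eq_intros)
      have D: "\<forall>m t. m < 2 \<and> 0 \<le> t \<and> t \<le> 1 \<longrightarrow> DERIV (diff m) t :> diff (Suc m) t"
      proof (intro allI impI)
        fix m :: nat and t :: real assume mt: "m < 2 \<and> 0 \<le> t \<and> t \<le> 1"
        let ?y = "x + t *\<^sub>R h"
        have yG: "?y \<in> G" using inG mt by blast
        show "DERIV (diff m) t :> diff (Suc m) t"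
        proof (cases "m = 0")
          case True
          have "((\<phi> \<circ> (\<lambda>t. x + t *\<^sub>R h)) has_derivative ((\<lambda>k. g ?y \<bullet> k) \<circ> (\<lambda>s. s *\<^sub>R h))) (at t)"
            by (rule diff_chain_at[OF lin]) (use dphi yG in blast)
          moreover have "((\<lambda>k. g ?y \<bullet> k) \<circ> (\<lambda>s. s *\<^sub>R h)) = (*) (g ?y \<bullet> h)"
            by (simp add: fun_eq_iff mult.commute)
          ultimately show ?thesis using True
            by (simp add: has_field_derivative_def df0 df1s o_def)
        next
          case False
          then have m1: "m = 1" using mt by simp
          have "((g \<circ> (\<lambda>t. x + t *\<^sub>R h)) has_derivative ((\<lambda>k. Hs ?y *v k) \<circ> (\<lambda>s. s *\<^sub>R h))) (at t)"
            by (rule diff_chain_at[OF lin]) (use dg yG in blast)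
          then have "((\<lambda>t. (g \<circ> (\<lambda>t. x + t *\<^sub>R h)) t \<bullet> h) has_derivative
                       (\<lambda>s. ((\<lambda>k. Hs ?y *v k) \<circ> (\<lambda>s. s *\<^sub>R h)) s \<bullet> h)) (at t)"
            by (rule has_derivative_inner_left)
          moreover have "(\<lambda>s. ((\<lambda>k. Hs ?y *v k) \<circ> (\<lambda>s. s *\<^sub>R h)) s \<bullet> h) = (*) (h \<bullet> (Hs ?y *v h))"
            by (simp add: fun_eq_iff matrix_vector_mult_scaleR inner_commute mult.commute)
          ultimately show ?thesis using m1
            by (simp add: has_field_derivative_def df1s df2[unfolded numeral_2_eq_2] o_def)
        qed
      qed
      obtain t where t: "0 < t" "t < 1"
        "diff 0 1 = (\<Sum>m<2. diff m 0 / fact m * (1 - 0)^m) + diff 2 t / fact 2 * (1 - 0)^2"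
        using Taylor_up[of 2 diff "diff 0" 0 1 0] D by auto
      have eq: "\<phi> (x + h) - \<phi> x - g x \<bullet> h - (h \<bullet> (Hs x *v h)) / 2
              = (h \<bullet> ((Hs (x + t *\<^sub>R h) - Hs x) *v h)) / 2"
        using t(3) by (simp add: diff_def numeral_2_eq_2 matrix_vector_mult_diff_rdistrib inner_diff_right)
      have "\<bar>h \<bullet> ((Hs (x + t *\<^sub>R h) - Hs x) *v h)\<bar> \<le> K * norm (Hs (x + t *\<^sub>R h) - Hs x) * (norm h)^2"
        unfolding K_def by (rule quad_le)
      also have "\<dots> \<le> K * (e / K) * (norm h)^2"
        using close[of t] t K by (intro mult_right_mono mult_left_mono) (auto simp: dist_norm)
      also have "\<dots> = e * (norm h)^2" using K by simp
      finally show ?thesis unfolding eq using e by simp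
    qed
    ultimately show ?thesis by blast
  qed
  ultimately show ?thesis by blast
qed




lemma quad_identity:
  fixes M :: "real^'n^'n"
  assumes symM: "transpose M = M"
  shows "(1 - t) * (A \<bullet> (M *v A)) + t * (B \<bullet> (M *v B))
         - ((1 - t) *\<^sub>R A + t *\<^sub>R B) \<bullet> (M *v ((1 - t) *\<^sub>R A + t *\<^sub>R B))
         = t * (1 - t) * ((A - B) \<bullet> (M *v (A - B)))"
proof -
  have c: "B \<bullet> (M *v A) = A \<bullet> (M *v B)"
    using sym_inner[OF symM, of B A] by (simp add: inner_commute)
  show ?thesis
    by (simp add: matrix_vector_right_distrib matrix_vector_mult_scaleR matrix_vector_mult_diff_distrib
        inner_add_left inner_add_right inner_diff_left inner_diff_right c algebra_simps)
qed

lemma quad_convex: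
  fixes M :: "real^'n^'n"
  assumes symM: "transpose M = M" and psdM: "\<forall>v. 0 \<le> v \<bullet> (M *v v)" and G: "convex G"
  shows "convex_on G (\<lambda>y. c + p \<bullet> (y - x) + ((y - x) \<bullet> (M *v (y - x))) / 2)"
proof (rule convex_onI[OF _ G])
  fix t :: real and a b :: "real^'n"
  assume t: "0 < t" "t < 1"
  define A where "A = a - x"
  define B where "B = b - x"
  have z: "(1 - t) *\<^sub>R a + t *\<^sub>R b - x = (1 - t) *\<^sub>R A + t *\<^sub>R B"
    unfolding A_def B_def by (simp add: algebra_simps)
  have lin: "p \<bullet> ((1 - t) *\<^sub>R A + t *\<^sub>R B) = (1 - t) * (p \<bullet> A) + t * (p \<bullet> B)"
    by (simp add: inner_add_right)
  have "0 \<le> t * (1 - t) * ((A - B) \<bullet> (M *v (A - B)))"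
    using t psdM by simp
  then have key: "((1 - t) *\<^sub>R A + t *\<^sub>R B) \<bullet> (M *v ((1 - t) *\<^sub>R A + t *\<^sub>R B))
      \<le> (1 - t) * (A \<bullet> (M *v A)) + t * (B \<bullet> (M *v B))"
    using quad_identity[OF symM, of t A B] by linarith
  then show "c + p \<bullet> ((1 - t) *\<^sub>R a + t *\<^sub>R b - x) + (((1 - t) *\<^sub>R a + t *\<^sub>R b - x) \<bullet> (M *v ((1 - t) *\<^sub>R a + t *\<^sub>R b - x))) / 2
     \<le> (1 - t) * (c + p \<bullet> (a - x) + ((a - x) \<bullet> (M *v (a - x))) / 2) +
        t * (c + p \<bullet> (b - x) + ((b - x) \<bullet> (M *v (b - x))) / 2)"
  proof -
    define qa where "qa = A \<bullet> (M *v A)"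
    define qb where "qb = B \<bullet> (M *v B)"
    define qz where "qz = ((1 - t) *\<^sub>R A + t *\<^sub>R B) \<bullet> (M *v ((1 - t) *\<^sub>R A + t *\<^sub>R B))"
    have eq: "(1 - t) * (c + p \<bullet> A + qa / 2) + t * (c + p \<bullet> B + qb / 2)
          - (c + ((1 - t) * (p \<bullet> A) + t * (p \<bullet> B)) + qz / 2) = ((1 - t) * qa + t * qb - qz) / 2"
      by (simp add: field_simps)
    moreover have "qz \<le> (1 - t) * qa + t * qb" using key unfolding qa_def qb_def qz_def .
    ultimately have "0 \<le> (1 - t) * (c + p \<bullet> A + qa / 2) + t * (c + p \<bullet> B + qb / 2)
          - (c + ((1 - t) * (p \<bullet> A) + t * (p \<bullet> B)) + qz / 2)" by simp
    then show ?thesis unfolding z lin A_def[symmetric] B_def[symmetric] qa_def[symmetric] qb_def[symmetric] qz_def[symmetric]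
      by simp
  qed
qed

lemma quad_C2:
  fixes M :: "real^'n^'n"
  assumes symM: "transpose M = M"
  shows "C2_hess G (\<lambda>y. c + p \<bullet> (y - x) + ((y - x) \<bullet> (M *v (y - x))) / 2) (\<lambda>_. M)"
  unfolding C2_hess_def
proof (intro exI[of _ "\<lambda>y. p + M *v (y - x)"] conjI ballI)
  fix y
  have "((\<lambda>y. c + p \<bullet> (y - x) + ((y - x) \<bullet> (M *v (y - x))) / 2) has_derivative
        (\<lambda>h. p \<bullet> h + (h \<bullet> (M *v (y - x)) + (y - x) \<bullet> (M *v h)) / 2)) (at y)"
    by (auto intro!: derivative_eq_intros bounded_linear.has_derivative[OF matrix_vector_mul_bounded_linear]
        simp: matrix_vector_mult_diff_distrib)
  moreover have "(\<lambda>h. p \<bullet> h + (h \<bullet> (M *v (y - x)) + (y - x) \<bullet> (M *v h)) / 2) = (\<lambda>h. (p + M *v (y - x)) \<bullet> h)"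
  proof
    fix h
    have "(y - x) \<bullet> (M *v h) = h \<bullet> (M *v (y - x))"
      using sym_inner[OF symM, of h "y - x"] by (simp add: inner_commute)
    then show "p \<bullet> h + (h \<bullet> (M *v (y - x)) + (y - x) \<bullet> (M *v h)) / 2 = (p + M *v (y - x)) \<bullet> h"
      by (simp add: inner_add_left inner_add_right inner_commute)
  qed
  ultimately show "((\<lambda>y. c + p \<bullet> (y - x) + ((y - x) \<bullet> (M *v (y - x))) / 2) has_derivative
        (\<lambda>h. (p + M *v (y - x)) \<bullet> h)) (at y)" by simp
next
  fix y
  show "((\<lambda>y. p + M *v (y - x)) has_derivative (\<lambda>h. M *v h)) (at y)"
    by (auto intro!: derivative_eq_intros bounded_linear.has_derivative[OF matrix_vector_mul_bounded_linear]
        simp: matrix_vector_mult_diff_distrib)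
next
  show "continuous_on G (\<lambda>y. p + M *v (y - x))"
    unfolding matrix_vector_mult_diff_distrib
    by (intro continuous_intros continuous_on_id linear_continuous_on matrix_vector_mul_linear)
  show "continuous_on G (\<lambda>_. M)" by simp
qed




definition outer_mat :: "real^'n \<Rightarrow> real^'n^'n" where "outer_mat v = (\<chi> i j. v$i * v$j)"

lemma outer_mat_mv: "outer_mat v *v x = (v \<bullet> x) *\<^sub>R v"
  by (simp add: outer_mat_def matrix_vector_mult_def inner_vec_def vec_eq_iff sum_distrib_left mult_ac)

lemma outer_mat_sym: "transpose (outer_mat v) = outer_mat v"
  by (simp add: outer_mat_def transpose_def vec_eq_iff mult.commute)

lemma outer_mat_quad: "x \<bullet> (outer_mat v *v x) = (v \<bullet> x)^2"
  by (simp add: outer_mat_mv power2_eq_square inner_commute)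

lemma trace_eq: "trace_mat A = trace A" by (simp add: trace_mat_def trace_def)

lemma trace_outer: "trace (outer_mat v) = v \<bullet> v"
  by (simp add: trace_def outer_mat_def inner_vec_def)

lemma trace_outer_mult: "trace (outer_mat v ** A) = v \<bullet> (A *v v)"
proof -
  have "trace (outer_mat v ** A) = trace (A ** outer_mat v)" by (rule trace_mul_sym)
  also have "\<dots> = v \<bullet> (A *v v)"
    by (simp add: trace_def outer_mat_def matrix_matrix_mult_def matrix_vector_mult_def inner_vec_def
      sum_distrib_left mult_ac)
  finally show ?thesis .
qed

lemma two_indices:
  assumes "CARD('n) \<ge> 2"
  shows "\<exists>i j :: 'n. i \<noteq> j"
proof (rule ccontr)
  assume "\<not> ?thesis"
  then have "\<forall>i j :: 'n. i = j" by blast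
  then have "(UNIV :: 'n set) = {undefined}" by blast
  then have "card (UNIV::'n set) = card {undefined::'n}" by (rule arg_cong)
  then have "CARD('n) = 1" by simp
  then show False using assms by simp
qed

lemma det_zero_ker:
  fixes A :: "real^'n^'n"
  assumes "A *v w = 0" "w \<noteq> 0"
  shows "det A = 0"
proof (rule ccontr)
  assume "det A \<noteq> 0"
  then have "invertible A" by (simp add: invertible_det_nz)
  then obtain B where "B ** A = mat 1" unfolding invertible_def by blast
  then have "\<forall>x. A *v x = 0 \<longrightarrow> x = 0" using matrix_left_invertible_ker by blast
  then show False using assms by blast
qed

lemma det_outer:
  fixes v :: "real^'n"
  assumes "CARD('n) \<ge> 2"
  shows "det (outer_mat v) = 0"
proof -
  obtain i j :: 'n where ij: "i \<noteq> j" using two_indices[OF assms] by blast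
  define w :: "real^'n" where "w = (if v$i = 0 \<and> v$j = 0 then axis i 1 else v$j *\<^sub>R axis i 1 - v$i *\<^sub>R axis j 1)"
  have vw: "v \<bullet> w = 0"
    unfolding w_def by (auto simp: inner_diff_right inner_axis mult.commute)
  have wn: "w \<noteq> 0"
  proof
    assume "w = 0"
    then have "w $ i = 0" "w $ j = 0" by auto
    then show False using ij unfolding w_def by (auto simp: axis_def split: if_splits)
  qed
  show ?thesis using det_zero_ker[of "outer_mat v" w] outer_mat_mv[of v w] vw wn by simp
qed

lemma outer_mat_S1:
  assumes "norm v = 1"
  shows "outer_mat v \<in> S1"
  unfolding S1_def psd_mat_def sym_mat_def trace_eq
  using assms by (simp add: outer_mat_sym outer_mat_quad trace_outer norm_eq_1)

lemma frob_sym: "transpose B = B \<Longrightarrow> frob B A = trace (B ** A)"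
  by (simp add: frob_def trace_eq)

lemma trace_transpose: "trace (transpose (A::real^'n^'n)) = trace A"
  by (simp add: trace_def transpose_def)

definition symm_part :: "real^'n^'n \<Rightarrow> real^'n^'n" where "symm_part H = (1/2) *\<^sub>R (H + transpose H)"

lemma symm_part_sym: "transpose (symm_part H) = symm_part H"
  by (simp add: symm_part_def transpose_scalar add.commute transpose_def vec_eq_iff)

lemma symm_part_quad: "h \<bullet> (symm_part H *v h) = h \<bullet> (H *v h)"
proof -
  have "h \<bullet> (transpose H *v h) = h \<bullet> (H *v h)"
    using inner_transpose[of h H h] by (simp add: inner_commute)
  then show ?thesis unfolding symm_part_def
    by (simp add: scaleR_matrix_vector_assoc[symmetric] matrix_vector_mult_add_rdistrib inner_add_right)
qed

lemma trace_symp: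
  assumes "transpose B = B"
  shows "trace (B ** symm_part H) = trace (B ** H)"
proof -
  have "trace (B ** transpose H) = trace (transpose (H ** transpose B))" by (simp add: matrix_transpose_mul)
  also have "\<dots> = trace (H ** B)" using assms by (simp add: trace_transpose)
  also have "\<dots> = trace (B ** H)" by (rule trace_mul_sym)
  finally have "trace (B ** transpose H) = trace (B ** H)" .
  moreover have "trace (B ** symm_part H) = (trace (B ** H) + trace (B ** transpose H)) / 2"
  proof -
    have "B ** symm_part H = (1/2) *\<^sub>R (B ** H + B ** transpose H)"
      unfolding symm_part_def matrix_scalar_ac scalar_matrix_assoc[symmetric] matrix_add_ldistrib by (simp add: scaleR_add_right)
    moreover have trs: "trace (c *\<^sub>R (A::real^'n^'n)) = c * trace A" for c A
      by (simp add: trace_def sum_distrib_left)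
    ultimately show ?thesis using trs[of "1/2" "B ** H + B ** transpose H"] trace_add[of "B ** H" "B ** transpose H"]
      by simp
  qed
  ultimately show ?thesis by simp
qed




lemma det_lim:
  fixes S N :: "real^'n^'n"
  shows "((\<lambda>e. det (S + e *\<^sub>R N)) \<longlongrightarrow> det S) (at_right 0)"
proof -
  have "continuous_on UNIV (\<lambda>e::real. det (S + e *\<^sub>R N))"
    unfolding det_def by (simp; intro continuous_intros)
  then have "isCont (\<lambda>e::real. det (S + e *\<^sub>R N)) 0" by (simp add: continuous_on_eq_continuous_at)
  then have "((\<lambda>e::real. det (S + e *\<^sub>R N)) \<longlongrightarrow> det S) (at 0)" by (simp add: isCont_def)
  then show ?thesis by (rule tendsto_within_subset) simp
qed

lemma det_ge_lim:
  fixes S N :: "real^'n^'n"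
  assumes "e0 > 0" "\<forall>e. 0 < e \<and> e < e0 \<longrightarrow> c \<le> det (S + e *\<^sub>R N)"
  shows "c \<le> det S"
proof (rule tendsto_lowerbound[OF det_lim])
  show "\<forall>\<^sub>F e in at_right 0. c \<le> det (S + e *\<^sub>R N)"
    using eventually_at_right_real[OF assms(1)] by (rule eventually_mono) (use assms(2) in auto)
qed simp

lemma det_le_lim:
  fixes S N :: "real^'n^'n"
  assumes "e0 > 0" "\<forall>e. 0 < e \<and> e < e0 \<longrightarrow> det (S + e *\<^sub>R N) \<le> c"
  shows "det S \<le> c"
proof (rule tendsto_upperbound[OF det_lim])
  show "\<forall>\<^sub>F e in at_right 0. det (S + e *\<^sub>R N) \<le> c"
    using eventually_at_right_real[OF assms(1)] by (rule eventually_mono) (use assms(2) in auto)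
qed simp

lemma orth_col_unit:
  assumes "orthogonal_matrix (Q::real^'n^'n)"
  shows "(\<chi> i. Q$i$k) \<bullet> (\<chi> i. Q$i$k) = 1"
proof -
  have "transpose Q ** mat 1 ** Q = mat 1" using orth_both[OF assms] by (simp add: matrix_mul_rid)
  then have "(transpose Q ** mat 1 ** Q) $ k $ k = 1" by (simp add: mat_def)
  then show ?thesis unfolding quad_entry by simp
qed

lemma psd_det_nonneg:
  fixes S :: "real^'n^'n"
  assumes "transpose S = S" "\<forall>v. 0 \<le> v \<bullet> (S *v v)"
  shows "0 \<le> det S"
proof -
  obtain Q where Q: "orthogonal_matrix Q" and diag: "\<forall>i j. i \<noteq> j \<longrightarrow> (transpose Q ** S ** Q) $ i $ j = 0"
    using spectral[OF assms(1)] by blast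
  have "det S = (\<Prod>k\<in>UNIV. (transpose Q ** S ** Q) $ k $ k)"
    using det_conj[OF Q, of S] det_diagonal[of "transpose Q ** S ** Q"] diag by simp
  also have "\<dots> \<ge> 0" by (rule prod_nonneg) (use psd_diag_nonneg[OF assms(2)] in blast)
  finally show ?thesis .
qed

lemma pd_det_pos:
  fixes S :: "real^'n^'n"
  assumes "transpose S = S" "\<forall>v. v \<noteq> 0 \<longrightarrow> 0 < v \<bullet> (S *v v)"
  shows "0 < det S"
proof -
  obtain Q where Q: "orthogonal_matrix Q" and diag: "\<forall>i j. i \<noteq> j \<longrightarrow> (transpose Q ** S ** Q) $ i $ j = 0"
    using spectral[OF assms(1)] by blast
  have "det S = (\<Prod>k\<in>UNIV. (transpose Q ** S ** Q) $ k $ k)"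
    using det_conj[OF Q, of S] det_diagonal[of "transpose Q ** S ** Q"] diag by simp
  also have "\<dots> > 0"
  proof (rule prod_pos)
    fix k :: 'n
    have "(\<chi> i. Q$i$k) \<noteq> 0" using orth_col_unit[OF Q, of k] by auto
    then show "0 < (transpose Q ** S ** Q) $ k $ k" unfolding quad_entry using assms(2) by blast
  qed
  finally show ?thesis .
qed

lemma pd_bound:
  fixes S :: "real^'n^'n"
  assumes "\<forall>v. v \<noteq> 0 \<longrightarrow> 0 < v \<bullet> (S *v v)"
  shows "\<exists>l>0. \<forall>v. l * (v \<bullet> v) \<le> v \<bullet> (S *v v)"
proof -
  obtain i :: 'n where True by blast
  have ne: "sphere (0::real^'n) 1 \<noteq> {}" using norm_axis_1[of i] by (metis mem_sphere_0 empty_iff)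
  obtain w where w: "w \<in> sphere 0 1" and wmin: "\<forall>y\<in>sphere 0 1. w \<bullet> (S *v w) \<le> y \<bullet> (S *v y)"
    using continuous_attains_inf[OF compact_sphere ne cont_quad] by blast
  define l where "l = w \<bullet> (S *v w)"
  have "w \<noteq> 0" using w by auto
  then have l: "l > 0" using assms l_def by blast
  have "l * (v \<bullet> v) \<le> v \<bullet> (S *v v)" for v
  proof (cases "v = 0")
    case True then show ?thesis by simp
  next
    case False
    have "v /\<^sub>R norm v \<in> sphere 0 1" using False by simp
    then have "l \<le> (v /\<^sub>R norm v) \<bullet> (S *v (v /\<^sub>R norm v))" using wmin l_def by blast
    then have "l \<le> (v \<bullet> (S *v v)) / (norm v)^2"
      by (simp add: matrix_vector_mult_scaleR power2_eq_square divide_inverse mult_ac)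
    then show ?thesis using False by (simp add: le_divide_eq power2_norm_eq_inner mult.commute)
  qed
  then show ?thesis using l by blast
qed

lemma shift_quad:
  fixes S :: "real^'n^'n"
  shows "v \<bullet> ((S + e *\<^sub>R mat 1) *v v) = v \<bullet> (S *v v) + e * (v \<bullet> v)"
  by (simp add: matrix_vector_mult_add_rdistrib scaleR_matrix_vector_assoc[symmetric] inner_add_right)

lemma shift_sym:
  fixes S :: "real^'n^'n"
  shows "transpose S = S \<Longrightarrow> transpose (S + e *\<^sub>R mat 1) = S + e *\<^sub>R mat 1"
  by (simp add: transpose_def vec_eq_iff mat_def)

lemma det_scale:
  fixes A :: "real^'n^'n"
  shows "det (c *\<^sub>R A) = c ^ CARD('n) * det A"
  by (simp add: det_def prod.distrib sum_distrib_left mult_ac)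

lemma diag_entry: "axis k 1 \<bullet> ((A::real^'n^'n) *v axis k 1) = A $ k $ k"
  by (simp add: inner_axis' matrix_vector_mul_component inner_axis)

lemma pd_inverse:
  fixes S :: "real^'n^'n"
  assumes sym: "transpose S = S" and pd: "\<forall>v. v \<noteq> 0 \<longrightarrow> 0 < v \<bullet> (S *v v)"
  shows "\<exists>Si. Si ** S = mat 1 \<and> S ** Si = mat 1 \<and> transpose Si = Si \<and> (\<forall>v. v \<noteq> 0 \<longrightarrow> 0 < v \<bullet> (Si *v v))"
proof -
  have "\<forall>x. S *v x = 0 \<longrightarrow> x = 0" using pd by force
  then obtain Si where L: "Si ** S = mat 1" using matrix_left_invertible_ker by blast
  then have R: "S ** Si = mat 1" using matrix_left_right_inverse by blast
  have "transpose Si ** S = mat 1"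
    using R sym by (metis matrix_transpose_mul transpose_mat)
  then have T: "transpose Si = Si"
    by (metis R matrix_mul_assoc matrix_mul_lid matrix_mul_rid)
  have P: "0 < v \<bullet> (Si *v v)" if "v \<noteq> 0" for v
  proof -
    define w where "w = Si *v v"
    have Sw: "S *v w = v" unfolding w_def using R by (simp add: matrix_vector_mul_assoc)
    then have "w \<noteq> 0" using that by auto
    then have "0 < w \<bullet> (S *v w)" using pd by blast
    then show ?thesis using Sw unfolding w_def by (simp add: inner_commute)
  qed
  show ?thesis using L R T P by blast
qed

lemma trace_pos:
  fixes A :: "real^'n^'n"
  assumes "\<forall>v. v \<noteq> 0 \<longrightarrow> 0 < v \<bullet> (A *v v)"
  shows "0 < trace A"
  unfolding trace_def
proof (rule sum_pos)
  fix k :: 'n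
  have "axis k (1::real) \<noteq> 0" by (simp add: axis_eq_0_iff)
  then show "0 < A $ k $ k" using assms diag_entry[of k A] by metis
qed auto




lemma mv_neg: "(H::real^'n^'n) *v (- h) = - (H *v h)"
  using matrix_vector_mult_diff_distrib[of H 0 h] by simp

lemma sub_part:
  fixes \<Omega> :: "(real^'n) set" and f :: "real^'n \<Rightarrow> real" and u :: "real^'n \<Rightarrow> real"
  assumes op: "open \<Omega>" and cv: "convex \<Omega>" and f0: "\<forall>x\<in>\<Omega>. 0 \<le> f x"
    and vs: "visc_sub_convex (\<lambda>A x. monge_ampere A (f x)) \<Omega> u"
  shows "visc_sub (\<lambda>A x. bellman A (f x)) \<Omega> u"
  unfolding visc_sub_def
proof (intro conjI allI impI)
  show "usc_on \<Omega> u" using vs unfolding visc_sub_convex_def by blast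
  have cu: "convex_on \<Omega> u" using vs unfolding visc_sub_convex_def by blast
  have T: "\<And>\<phi> Hs x. C2_hess \<Omega> \<phi> Hs \<Longrightarrow> convex_on \<Omega> \<phi> \<Longrightarrow> x \<in> \<Omega> \<Longrightarrow> loc_max_at \<Omega> (\<lambda>y. u y - \<phi> y) x
        \<Longrightarrow> monge_ampere (Hs x) (f x) \<le> 0"
    using vs unfolding visc_sub_convex_def by blast
  fix \<phi> Hs x
  assume a: "C2_hess \<Omega> \<phi> Hs \<and> x \<in> \<Omega> \<and> loc_max_at \<Omega> (\<lambda>y. u y - \<phi> y) x"
  then have xO: "x \<in> \<Omega>" by blast
  obtain g where dphi: "\<forall>y\<in>\<Omega>. (\<phi> has_derivative (\<lambda>h. g y \<bullet> h)) (at y)"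
      and dg: "\<forall>y\<in>\<Omega>. (g has_derivative (\<lambda>h. Hs y *v h)) (at y)"
      and cH: "continuous_on \<Omega> Hs"
    using a unfolding C2_hess_def by blast
  obtain r where r: "r > 0" "\<forall>y\<in>\<Omega>. dist y x < r \<longrightarrow> u y - \<phi> y \<le> u x - \<phi> x"
    using a unfolding loc_max_at_def by blast
  define H where "H = Hs x"
  define S where "S = symm_part H"
  define d where "d = CARD('n)"
  have d0: "d > 0" unfolding d_def by simp
  have tay: "\<exists>\<delta>>0. \<forall>h. norm h < \<delta> \<longrightarrow> x + h \<in> \<Omega> \<and>
     \<bar>\<phi> (x + h) - \<phi> x - g x \<bullet> h - (h \<bullet> (H *v h)) / 2\<bar> \<le> e * (norm h)^2" if "e > 0" for e
    unfolding H_def by (rule taylor2[OF op xO dphi dg cH that])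
  have symS: "transpose S = S" unfolding S_def by (rule symm_part_sym)
  have weak: "- (2 * e) * (v \<bullet> v) \<le> v \<bullet> (H *v v)" if e: "e > 0" for v e
  proof -
    obtain \<delta> where \<delta>: "\<delta> > 0" "\<forall>h. norm h < \<delta> \<longrightarrow> x + h \<in> \<Omega> \<and>
       \<bar>\<phi> (x + h) - \<phi> x - g x \<bullet> h - (h \<bullet> (H *v h)) / 2\<bar> \<le> e * (norm h)^2"
      using tay[OF e] by blast
    define t where "t = min \<delta> r / (2 * (norm v + 1))"
    have P1: "norm v + 1 > 0" using norm_ge_zero[of v] by linarith
    have "2 * (norm v + 1) > 0" using norm_ge_zero[of v] by (smt (verit))
    then have t0: "t > 0" unfolding t_def using \<delta>(1) r(1) by (intro divide_pos_pos) auto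
    define h where "h = t *\<^sub>R v"
    have "norm h = t * norm v" unfolding h_def using t0 by simp
    also have "\<dots> \<le> t * (norm v + 1)" using t0 by simp
    also have "\<dots> = min \<delta> r / 2" unfolding t_def using P1 by (simp add: field_simps)
    finally have nh: "norm h < \<delta>" "norm h < r" using \<delta> r by auto
    have nmh: "norm (- h) < \<delta>" "norm (-h) < r" using nh by simp_all
    have T1: "\<bar>\<phi> (x + h) - \<phi> x - g x \<bullet> h - (h \<bullet> (H *v h)) / 2\<bar> \<le> e * (norm h)^2"
      and in1: "x + h \<in> \<Omega>" using \<delta>(2) nh by blast+
    have T2: "\<bar>\<phi> (x + - h) - \<phi> x - g x \<bullet> (- h) - ((- h) \<bullet> (H *v (- h))) / 2\<bar> \<le> e * (norm (- h))^2"
      and in2: "x + - h \<in> \<Omega>" using \<delta>(2) nmh by blast+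
    have L1: "u (x + h) - \<phi> (x + h) \<le> u x - \<phi> x" using r(2) in1 nh by (simp add: dist_norm)
    have L2: "u (x + - h) - \<phi> (x + - h) \<le> u x - \<phi> x" using r(2) in2 nh by (simp add: dist_norm)
    have "u ((1 - 1/2) *\<^sub>R (x + h) + (1/2) *\<^sub>R (x + - h)) \<le> (1 - 1/2) * u (x + h) + (1/2) * u (x + - h)"
      by (rule convex_onD[OF cu]) (use in1 in2 in auto)
    moreover have "(1 - 1/2) *\<^sub>R (x + h) + (1/2) *\<^sub>R (x + - h) = x" by (simp add: vec_eq_iff algebra_simps)
    ultimately have C: "2 * u x \<le> u (x + h) + u (x + - h)" by simp
    have "0 \<le> h \<bullet> (H *v h) + 2 * e * (norm h)^2"
      using T1 T2 L1 L2 C by (simp add: abs_le_iff mv_neg)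
    also have "\<dots> = t^2 * (v \<bullet> (H *v v) + 2 * e * (v \<bullet> v))"
      unfolding power2_norm_eq_inner h_def by (simp add: matrix_vector_mult_scaleR power2_eq_square algebra_simps)
    finally have "0 \<le> v \<bullet> (H *v v) + 2 * e * (v \<bullet> v)"
      using t0 by (simp add: zero_le_mult_iff)
    then show ?thesis by simp
  qed
  have psdH: "0 \<le> v \<bullet> (H *v v)" for v
  proof (rule ccontr)
    assume neg: "\<not> 0 \<le> v \<bullet> (H *v v)"
    then have "v \<noteq> 0" by auto
    then have vv: "v \<bullet> v > 0" by simp
    define e where "e = - (v \<bullet> (H *v v)) / (4 * (v \<bullet> v))"
    have "0 < - (v \<bullet> (H *v v))" using neg by simp
    moreover have "0 < 4 * (v \<bullet> v)" using vv by simp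
    ultimately have e: "e > 0" unfolding e_def by (rule divide_pos_pos)
    have "- (2 * e) * (v \<bullet> v) = (v \<bullet> (H *v v)) / 2" unfolding e_def using vv by (simp add: field_simps)
    then show False using weak[OF e, of v] neg by simp
  qed
  have psdS: "\<forall>v. 0 \<le> v \<bullet> (S *v v)" unfolding S_def symm_part_quad using psdH by blast
  have detM: "(f x / real d) ^ d \<le> det (S + e *\<^sub>R mat 1)" if e: "0 < e \<and> e < 1" for e
  proof -
    define M where "M = S + e *\<^sub>R mat 1"
    have symM: "transpose M = M" unfolding M_def by (rule shift_sym[OF symS])
    have psdM: "\<forall>v. 0 \<le> v \<bullet> (M *v v)" unfolding M_def shift_quad using psdS e by (simp add: add_nonneg_nonneg)
    define q where "q = (\<lambda>y. u x + g x \<bullet> (y - x) + ((y - x) \<bullet> (M *v (y - x))) / 2)"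
    have C2q: "C2_hess \<Omega> q (\<lambda>_. M)" unfolding q_def by (rule quad_C2[OF symM])
    have cq: "convex_on \<Omega> q" unfolding q_def by (rule quad_convex[OF symM psdM cv])
    obtain \<delta> where \<delta>: "\<delta> > 0" "\<forall>h. norm h < \<delta> \<longrightarrow> x + h \<in> \<Omega> \<and>
       \<bar>\<phi> (x + h) - \<phi> x - g x \<bullet> h - (h \<bullet> (H *v h)) / 2\<bar> \<le> (e/2) * (norm h)^2"
      using tay[of "e/2"] e by auto
    have lm: "loc_max_at \<Omega> (\<lambda>y. u y - q y) x"
      unfolding loc_max_at_def
    proof (intro exI[of _ "min r \<delta>"] conjI ballI impI)
      show "0 < min r \<delta>" using r \<delta> by simp
      fix y assume yO: "y \<in> \<Omega>" and dy: "dist y x < min r \<delta>"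
      define h where "h = y - x"
      have y: "y = x + h" unfolding h_def by simp
      have nh: "norm h < \<delta>" using dy unfolding h_def by (simp add: dist_norm)
      have Tb: "\<bar>\<phi> (x + h) - \<phi> x - g x \<bullet> h - (h \<bullet> (H *v h)) / 2\<bar> \<le> (e/2) * (norm h)^2"
        using \<delta>(2) nh by blast
      have L: "u y - \<phi> y \<le> u x - \<phi> x" using r(2) yO dy by simp
      have qy: "q y = u x + g x \<bullet> h + (h \<bullet> (H *v h)) / 2 + (e/2) * (norm h)^2"
        unfolding q_def M_def h_def[symmetric] shift_quad S_def symm_part_quad
        by (simp add: power2_norm_eq_inner field_simps)
      have qx: "q x = u x" unfolding q_def by simp
      show "u y - q y \<le> u x - q x"
        using Tb[unfolded abs_le_iff] L qy qx unfolding y by linarith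
    qed
    have "monge_ampere M (f x) \<le> 0" using T[OF C2q cq xO lm] .
    then show ?thesis unfolding monge_ampere_def M_def d_def by simp
  qed
  have detS: "(f x / real d) ^ d \<le> det S"
    by (rule det_ge_lim[of 1]) (use detM in auto)
  have fx: "0 \<le> f x" using f0 xO by blast
  have rootS: "f x / real d \<le> root d (det S)"
  proof -
    have "root d ((f x / real d) ^ d) \<le> root d (det S)" using detS d0 by simp
    then show ?thesis using real_root_power_cancel[OF d0, of "f x / real d"] fx by simp
  qed
  have elem: "- frob B H + f x * root d (det B) \<le> 0" if B: "B \<in> S1" for B
  proof -
    have psdB: "psd_mat B" using B unfolding S1_def by blast
    have symB: "transpose B = B" using psdB unfolding psd_mat_def sym_mat_def by blast
    have detB: "0 \<le> det B" using psdB unfolding psd_mat_def sym_mat_def by (intro psd_det_nonneg) auto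
    have psdS': "psd_mat S" unfolding psd_mat_def sym_mat_def using symS psdS by blast
    have fr: "frob B H = trace (B ** S)" unfolding S_def using frob_sym[OF symB] trace_symp[OF symB] by simp
    have am: "real d * root d (det B * det S) \<le> trace (B ** S)"
      unfolding d_def by (rule trace_amgm[OF psdB psdS'])
    have "f x * root d (det B) = real d * (f x / real d) * root d (det B)" using d0 by simp
    also have "\<dots> \<le> real d * root d (det S) * root d (det B)"
      using rootS d0 detB by (intro mult_right_mono mult_left_mono) auto
    also have "\<dots> = real d * root d (det B * det S)" by (simp add: real_root_mult)
    finally show ?thesis using am fr by simp
  qed
  obtain i :: 'n where True by blast
  have ne: "S1 \<noteq> ({} :: (real^'n^'n) set)" using outer_mat_S1[of "axis i 1"] by (auto simp: norm_axis_1)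
  show "bellman (Hs x) (f x) \<le> 0"
    unfolding bellman_def H_def[symmetric] d_def[symmetric]
    by (rule cSUP_least[OF ne]) (rule elem)
qed




lemma trace_scale: "trace (c *\<^sub>R (A::real^'n^'n)) = c * trace A"
  by (simp add: trace_def sum_distrib_left)

lemma super_part:
  fixes \<Omega> :: "(real^'n) set" and f :: "real^'n \<Rightarrow> real" and u :: "real^'n \<Rightarrow> real"
  assumes card2: "CARD('n) \<ge> 2" and op: "open \<Omega>" and cv: "convex \<Omega>" and f0: "\<forall>x\<in>\<Omega>. 0 \<le> f x"
    and vs: "visc_super_convex (\<lambda>A x. monge_ampere A (f x)) \<Omega> u"
  shows "visc_super (\<lambda>A x. bellman A (f x)) \<Omega> u"
  unfolding visc_super_def
proof (intro conjI allI impI)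
  show "lsc_on \<Omega> u" using vs unfolding visc_super_convex_def by blast
  have T: "\<And>\<phi> Hs x. C2_hess \<Omega> \<phi> Hs \<Longrightarrow> convex_on \<Omega> \<phi> \<Longrightarrow> x \<in> \<Omega> \<Longrightarrow> loc_min_at \<Omega> (\<lambda>y. u y - \<phi> y) x
        \<Longrightarrow> 0 \<le> monge_ampere (Hs x) (f x)"
    using vs unfolding visc_super_convex_def by blast
  fix \<phi> Hs x
  assume a: "C2_hess \<Omega> \<phi> Hs \<and> x \<in> \<Omega> \<and> loc_min_at \<Omega> (\<lambda>y. u y - \<phi> y) x"
  then have xO: "x \<in> \<Omega>" by blast
  obtain g where dphi: "\<forall>y\<in>\<Omega>. (\<phi> has_derivative (\<lambda>h. g y \<bullet> h)) (at y)"
      and dg: "\<forall>y\<in>\<Omega>. (g has_derivative (\<lambda>h. Hs y *v h)) (at y)"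
      and cH: "continuous_on \<Omega> Hs"
    using a unfolding C2_hess_def by blast
  obtain r where r: "r > 0" "\<forall>y\<in>\<Omega>. dist y x < r \<longrightarrow> u x - \<phi> x \<le> u y - \<phi> y"
    using a unfolding loc_min_at_def by blast
  define H where "H = Hs x"
  define S where "S = symm_part H"
  define d where "d = CARD('n)"
  have d0: "d > 0" unfolding d_def by simp
  have fx: "0 \<le> f x" using f0 xO by blast
  have tay: "\<exists>\<delta>>0. \<forall>h. norm h < \<delta> \<longrightarrow> x + h \<in> \<Omega> \<and>
     \<bar>\<phi> (x + h) - \<phi> x - g x \<bullet> h - (h \<bullet> (H *v h)) / 2\<bar> \<le> e * (norm h)^2" if "e > 0" for e
    unfolding H_def by (rule taylor2[OF op xO dphi dg cH that])
  have symS: "transpose S = S" unfolding S_def by (rule symm_part_sym)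
  have frS: "frob B H = trace (B ** S)" if "transpose B = B" for B
    unfolding S_def using frob_sym[OF that] trace_symp[OF that] by simp
  define F where "F = (\<lambda>B::real^'n^'n. - frob B H + f x * root d (det B))"
  have bdd: "bdd_above (F ` S1)"
  proof -
    define c where "c = real d * norm S"
    have c0: "0 \<le> c" unfolding c_def by simp
    have "F B \<le> c + f x / real d" if B: "B \<in> S1" for B
    proof -
      have psdB: "psd_mat B" and trB: "trace B = 1" using B unfolding S1_def by (auto simp: trace_eq)
      have symB: "transpose B = B" using psdB unfolding psd_mat_def sym_mat_def by blast
      have qB: "\<forall>v. 0 \<le> v \<bullet> (B *v v)" using psdB unfolding psd_mat_def by blast
      define P where "P = S + c *\<^sub>R mat 1"
      have qP: "0 \<le> v \<bullet> (P *v v)" for v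
      proof -
        have "\<bar>v \<bullet> (S *v v)\<bar> \<le> c * (v \<bullet> v)"
          using quad_le[of v S] unfolding c_def d_def by (simp add: power2_norm_eq_inner)
        then show ?thesis unfolding P_def shift_quad by simp
      qed
      have psdP: "psd_mat P" unfolding psd_mat_def sym_mat_def P_def
        using shift_sym[OF symS] qP unfolding P_def by blast
      have dB: "0 \<le> det B" using psd_det_nonneg[OF symB qB] .
      have dP: "0 \<le> det P" using psdP unfolding psd_mat_def sym_mat_def by (intro psd_det_nonneg) auto
      have "0 \<le> real d * root d (det B * det P)" using dB dP d0 by simp
      also have "\<dots> \<le> trace (B ** P)" unfolding d_def by (rule trace_amgm[OF psdB psdP])
      also have "trace (B ** P) = trace (B ** S) + c"
        unfolding P_def matrix_add_ldistrib matrix_scalar_ac trace_add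
        using trB by (simp add: trace_scale matrix_mul_rid)
      finally have t1: "- frob B H \<le> c" using frS[OF symB] by simp
      have "real d * root d (det B) \<le> trace B" unfolding d_def by (rule psd_amgm[OF psdB])
      then have "root d (det B) \<le> 1 / real d" using trB d0 by (simp add: field_simps)
      then have "f x * root d (det B) \<le> f x * (1 / real d)" using fx by (rule mult_left_mono)
      then show ?thesis unfolding F_def using t1 by simp
    qed
    then show ?thesis by (intro bdd_aboveI2) blast
  qed
  have "\<exists>B\<in>S1. 0 \<le> F B"
  proof (cases "\<exists>v. v \<noteq> 0 \<and> v \<bullet> (S *v v) \<le> 0")
    case True
    then obtain v where v: "v \<noteq> 0" "v \<bullet> (S *v v) \<le> 0" by blast
    define w where "w = v /\<^sub>R norm v"
    have nw: "norm w = 1" unfolding w_def using v by simp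
    have "w \<bullet> (S *v w) = (v \<bullet> (S *v v)) / (norm v)^2"
      unfolding w_def by (simp add: matrix_vector_mult_scaleR power2_eq_square divide_inverse mult_ac)
    then have ws: "w \<bullet> (S *v w) \<le> 0" using v by (simp add: divide_le_0_iff)
    have "frob (outer_mat w) H = w \<bullet> (S *v w)" using frS[OF outer_mat_sym] trace_outer_mult by simp
    then have "0 \<le> F (outer_mat w)" unfolding F_def using ws det_outer[OF card2] d0 by simp
    then show ?thesis using outer_mat_S1[OF nw] by blast
  next
    case False
    then have pd: "\<forall>v. v \<noteq> 0 \<longrightarrow> 0 < v \<bullet> (S *v v)" by (auto simp: not_le)
    obtain l where l: "l > 0" "\<forall>v. l * (v \<bullet> v) \<le> v \<bullet> (S *v v)" using pd_bound[OF pd] by blast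
    have detM: "det (S + e *\<^sub>R (- mat 1)) \<le> (f x / real d) ^ d" if e: "0 < e \<and> e < l" for e
    proof -
      define M where "M = S + (- e) *\<^sub>R mat 1"
      have Meq: "S + e *\<^sub>R (- mat 1) = M" unfolding M_def by simp
      have symM: "transpose M = M" unfolding M_def by (rule shift_sym[OF symS])
      have psdM: "\<forall>v. 0 \<le> v \<bullet> (M *v v)"
      proof
        fix v :: "real^'n"
        have "0 \<le> (l - e) * (v \<bullet> v)" using e by simp
        then show "0 \<le> v \<bullet> (M *v v)" unfolding M_def shift_quad using l(2)[rule_format, of v]
          by (simp add: algebra_simps)
      qed
      define q where "q = (\<lambda>y. u x + g x \<bullet> (y - x) + ((y - x) \<bullet> (M *v (y - x))) / 2)"
      have C2q: "C2_hess \<Omega> q (\<lambda>_. M)" unfolding q_def by (rule quad_C2[OF symM])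
      have cq: "convex_on \<Omega> q" unfolding q_def by (rule quad_convex[OF symM psdM cv])
      obtain \<delta> where \<delta>: "\<delta> > 0" "\<forall>h. norm h < \<delta> \<longrightarrow> x + h \<in> \<Omega> \<and>
         \<bar>\<phi> (x + h) - \<phi> x - g x \<bullet> h - (h \<bullet> (H *v h)) / 2\<bar> \<le> (e/2) * (norm h)^2"
        using tay[of "e/2"] e by auto
      have lm: "loc_min_at \<Omega> (\<lambda>y. u y - q y) x"
        unfolding loc_min_at_def
      proof (intro exI[of _ "min r \<delta>"] conjI ballI impI)
        show "0 < min r \<delta>" using r \<delta> by simp
        fix y assume yO: "y \<in> \<Omega>" and dy: "dist y x < min r \<delta>"
        define h where "h = y - x"
        have y: "y = x + h" unfolding h_def by simp
        have nh: "norm h < \<delta>" using dy unfolding h_def by (simp add: dist_norm)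
        have Tb: "\<bar>\<phi> (x + h) - \<phi> x - g x \<bullet> h - (h \<bullet> (H *v h)) / 2\<bar> \<le> (e/2) * (norm h)^2"
          using \<delta>(2) nh by blast
        have L: "u x - \<phi> x \<le> u y - \<phi> y" using r(2) yO dy by simp
        have qy: "q y = u x + g x \<bullet> h + (h \<bullet> (H *v h)) / 2 - (e/2) * (norm h)^2"
          unfolding q_def M_def h_def[symmetric] shift_quad S_def symm_part_quad
          by (simp add: power2_norm_eq_inner field_simps)
        have qx: "q x = u x" unfolding q_def by simp
        show "u x - q x \<le> u y - q y"
          using Tb[unfolded abs_le_iff] L qy qx unfolding y by linarith
      qed
      have "0 \<le> monge_ampere M (f x)" using T[OF C2q cq xO lm] .
      then show ?thesis unfolding monge_ampere_def Meq d_def by simp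
    qed
    have detS: "det S \<le> (f x / real d) ^ d"
      by (rule det_le_lim[where N = "- mat 1", OF l(1)]) (use detM in auto)
    have dS: "0 < det S" by (rule pd_det_pos[OF symS pd])
    define rS where "rS = root d (det S)"
    have rS0: "0 < rS" unfolding rS_def using dS d0 by simp
    have rSle: "real d * rS \<le> f x"
    proof -
      have "rS \<le> root d ((f x / real d) ^ d)" unfolding rS_def using detS d0 by simp
      also have "\<dots> = f x / real d" using real_root_power_cancel[OF d0, of "f x / real d"] fx by simp
      finally show ?thesis using d0 by (simp add: field_simps)
    qed
    obtain Si where Si: "Si ** S = mat 1" "S ** Si = mat 1" "transpose Si = Si"
        "\<forall>v. v \<noteq> 0 \<longrightarrow> 0 < v \<bullet> (Si *v v)"
      using pd_inverse[OF symS pd] by blast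
    define t where "t = trace Si"
    have t0: "t > 0" unfolding t_def by (rule trace_pos[OF Si(4)])
    define B where "B = (1/t) *\<^sub>R Si"
    have symB: "transpose B = B" unfolding B_def using Si(3) by (simp add: transpose_scalar)
    have qB: "0 \<le> v \<bullet> (B *v v)" for v
    proof (cases "v = 0")
      case True then show ?thesis by simp
    next
      case False
      then have "0 < v \<bullet> (Si *v v)" using Si(4) by blast
      then show ?thesis unfolding B_def using t0 by (simp add: scaleR_matrix_vector_assoc[symmetric])
    qed
    have trB: "trace B = 1" unfolding B_def trace_scale t_def[symmetric] using t0 by simp
    have BS1: "B \<in> S1" unfolding S1_def psd_mat_def sym_mat_def trace_eq using symB qB trB by blast
    have frB: "frob B H = real d / t"
    proof -
      have "frob B H = trace (B ** S)" by (rule frS[OF symB])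
      also have "B ** S = (1/t) *\<^sub>R (Si ** S)" unfolding B_def by (simp add: scalar_matrix_assoc)
      also have "trace \<dots> = real d / t" unfolding trace_scale Si(1) trace_I d_def by simp
      finally show ?thesis .
    qed
    have dSi: "det Si = 1 / det S"
    proof -
      have "det Si * det S = 1" using Si(1) det_mul[of Si S] by simp
      then show ?thesis using dS by (simp add: field_simps)
    qed
    have rB: "root d (det B) = (1/t) / rS"
    proof -
      have "det B = (1/t) ^ d * (1 / det S)" unfolding B_def det_scale dSi d_def ..
      then have "root d (det B) = root d ((1/t) ^ d) * root d (1 / det S)" by (simp only: real_root_mult)
      also have "root d ((1/t) ^ d) = 1/t" using real_root_power_cancel[OF d0, of "1/t"] t0 by simp
      also have "root d (1 / det S) = 1 / rS" unfolding rS_def using d0 by (simp add: real_root_divide real_root_one)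
      finally show ?thesis by simp
    qed
    have "F B = (f x / rS - real d) / t" unfolding F_def frB rB using t0 by (simp add: field_simps)
    moreover have "real d \<le> f x / rS" using rSle rS0 by (simp add: field_simps)
    ultimately have "0 \<le> F B" using t0 by simp
    then show ?thesis using BS1 by blast
  qed
  then obtain B where B: "B \<in> S1" "0 \<le> F B" by blast
  show "0 \<le> bellman (Hs x) (f x)"
    unfolding bellman_def H_def[symmetric] d_def[symmetric]
    using cSUP_upper2[OF bdd B] unfolding F_def .
qed


theorem theorem3p3:
  fixes \<Omega> :: "(real^'n) set" and f :: "real^'n \<Rightarrow> real" and u :: "real^'n \<Rightarrow> real"
  assumes "CARD('n) \<ge> 2"
    and "open \<Omega>" and "bounded \<Omega>" and "\<Omega> \<noteq> {}" and "convex \<Omega>" and "strictly_convex_set \<Omega>"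
    and "continuous_on \<Omega> f" and "\<forall>x\<in>\<Omega>. 0 \<le> f x"
  shows "(visc_sub_convex (\<lambda>A x. monge_ampere A (f x)) \<Omega> u
            \<longrightarrow> visc_sub (\<lambda>A x. bellman A (f x)) \<Omega> u)
       \<and> (visc_super_convex (\<lambda>A x. monge_ampere A (f x)) \<Omega> u
            \<longrightarrow> visc_super (\<lambda>A x. bellman A (f x)) \<Omega> u)"
proof -
  have sub: "visc_sub_convex (\<lambda>A x. monge_ampere A (f x)) \<Omega> u
            \<longrightarrow> visc_sub (\<lambda>A x. bellman A (f x)) \<Omega> u"
    using sub_part[OF assms(2) assms(5) assms(8)] by blast
  have sup: "visc_super_convex (\<lambda>A x. monge_ampere A (f x)) \<Omega> u
            \<longrightarrow> visc_super (\<lambda>A x. bellman A (f x)) \<Omega> u"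
    using super_part[OF assms(1) assms(2) assms(5) assms(8)] by blast
  show ?thesis using sub sup by blast
qed

end
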